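(* Let $G$ be a connected simple graph (finite or infinite) with $C_G<\infty$. Then the set $DM(G)=\{\mu:\mu\text{ doubling measure on } G,\ C_\mu=C_G\}$ is a non-empty convex cone.
   Context: $G$ carries the shortest-path distance $d_G$. A measure on $G$ is a weight function $\mu:V_G\to(0,\infty)$, with $\mu(A)=\sum_{v\in A}\mu(v)$. Closed balls: $B(x,r)=\{y:d_G(x,y)\le r\}$. The doubling constant is $C_\mu=\sup\{\mu(B(x,2k+1))/\mu(B(x,k)):x\in V_G,\ k\in\{0,1,2,\dots\}\}$ (equivalently $\sup_{x,r>0}\mu(B^o(x,2r))/\mu(B^o(x,r))$ with open balls); $\mu$ is doubling if $C_\mu<\infty$, and $C_G=\inf\{C_\mu:\mu\text{ doubling on }G\}$. *)

theory Defs
  imports "HOL-Analysis.Analysis"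
begin

definition simple_graph :: "('a \<Rightarrow> 'a \<Rightarrow> bool) \<Rightarrow> bool" where
  "simple_graph E \<longleftrightarrow> (\<forall>x y. E x y \<longrightarrow> E y x) \<and> (\<forall>x. \<not> E x x)"

definition connected_graph :: "('a \<Rightarrow> 'a \<Rightarrow> bool) \<Rightarrow> bool" where
  "connected_graph E \<longleftrightarrow> (\<forall>x y. \<exists>n. (E ^^ n) x y)"

definition gdist :: "('a \<Rightarrow> 'a \<Rightarrow> bool) \<Rightarrow> 'a \<Rightarrow> 'a \<Rightarrow> nat" where
  "gdist E x y = (LEAST n. (E ^^ n) x y)"

definition gball :: "('a \<Rightarrow> 'a \<Rightarrow> bool) \<Rightarrow> 'a \<Rightarrow> nat \<Rightarrow> 'a set" where
  "gball E x r = {y. gdist E x y \<le> r}"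

text \<open>mu(A) = sum of the weights over A (possibly infinite, hence in ennreal).\<close>
definition wmeasure :: "('a \<Rightarrow> real) \<Rightarrow> 'a set \<Rightarrow> ennreal" where
  "wmeasure \<mu> A = infsum (\<lambda>v. ennreal (\<mu> v)) A"

definition doubling_const :: "('a \<Rightarrow> 'a \<Rightarrow> bool) \<Rightarrow> ('a \<Rightarrow> real) \<Rightarrow> ennreal" where
  "doubling_const E \<mu> =
     (SUP p \<in> (UNIV :: ('a \<times> nat) set).
        wmeasure \<mu> (gball E (fst p) (2 * snd p + 1)) / wmeasure \<mu> (gball E (fst p) (snd p)))"

definition doubling_measure :: "('a \<Rightarrow> 'a \<Rightarrow> bool) \<Rightarrow> ('a \<Rightarrow> real) \<Rightarrow> bool" where
  "doubling_measure E \<mu> \<longleftrightarrow> (\<forall>v. \<mu> v > 0) \<and> doubling_const E \<mu> < \<infinity>"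

definition graph_doubling_const :: "('a \<Rightarrow> 'a \<Rightarrow> bool) \<Rightarrow> ennreal" where
  "graph_doubling_const E = (INF \<mu> \<in> {\<mu>. doubling_measure E \<mu>}. doubling_const E \<mu>)"

definition DM :: "('a \<Rightarrow> 'a \<Rightarrow> bool) \<Rightarrow> ('a \<Rightarrow> real) set" where
  "DM E = {\<mu>. doubling_measure E \<mu> \<and> doubling_const E \<mu> = graph_doubling_const E}"

definition convex_cone_fun :: "('a \<Rightarrow> real) set \<Rightarrow> bool" where
  "convex_cone_fun S \<longleftrightarrow>
     (\<forall>\<mu>\<in>S. \<forall>\<nu>\<in>S. \<forall>a b. a > 0 \<longrightarrow> b > 0 \<longrightarrow> (\<lambda>v. a * \<mu> v + b * \<nu> v) \<in> S)"

end

theory Submission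
  imports Defs
begin

lemma gdist_path: "connected_graph E \<Longrightarrow> (E ^^ gdist E x y) x y"
  unfolding gdist_def connected_graph_def by (rule LeastI_ex) auto

lemma gdist_le: "(E ^^ n) x y \<Longrightarrow> gdist E x y \<le> n"
  by (simp add: gdist_def Least_le)

lemma gdist_self: "gdist E x x = 0"
  using gdist_le[where n=0 and E=E and x=x and y=x] by simp

lemma gdist_edge: "E x y \<Longrightarrow> gdist E x y \<le> 1"
  using gdist_le[where n=1 and E=E and x=x and y=y] by (simp only: relpowp_1)

lemma in_gball_self: "x \<in> gball E x k"
  by (simp add: gball_def gdist_self)

lemma gball0: "connected_graph E \<Longrightarrow> gball E x 0 = {x}"
proof -
  assume c: "connected_graph E"
  have "y = x" if "y \<in> gball E x 0" for y
  proof -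
    from that have "gdist E x y = 0" by (simp add: gball_def)
    with gdist_path[OF c, of x y] show ?thesis by simp
  qed
  then show ?thesis using in_gball_self[of x E 0] by blast
qed

lemma gball_Suc_sub:
  assumes c: "connected_graph E"
  shows "gball E x (Suc r) \<subseteq> gball E x r \<union> (\<Union>z\<in>gball E x r. {y. E z y})"
proof
  fix y assume y: "y \<in> gball E x (Suc r)"
  show "y \<in> gball E x r \<union> (\<Union>z\<in>gball E x r. {y. E z y})"
  proof (cases "gdist E x y \<le> r")
    case True then show ?thesis by (simp add: gball_def)
  next
    case False
    with y have "gdist E x y = Suc r" by (simp add: gball_def)
    with gdist_path[OF c, of x y] have "(E ^^ Suc r) x y" by simp
    then obtain z where "(E ^^ r) x z" "E z y" by (rule relpowp_Suc_E)
    then have "z \<in> gball E x r" using gdist_le by (simp add: gball_def)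
    with \<open>E z y\<close> show ?thesis by blast
  qed
qed

lemma gball_finite:
  assumes c: "connected_graph E" and lf: "\<And>z. finite {y. E z y}"
  shows "finite (gball E x r)"
proof (induction r)
  case 0 then show ?case by (simp add: gball0[OF c])
next
  case (Suc r)
  show ?case by (rule finite_subset[OF gball_Suc_sub[OF c]]) (use Suc lf in auto)
qed

lemma wmeasure_finite:
  assumes "finite A" "\<And>v. \<mu> v > 0"
  shows "wmeasure \<mu> A = ennreal (sum \<mu> A)"
  using assms by (simp add: wmeasure_def sum_ennreal less_imp_le)

lemma wmeasure_ge:
  assumes "finite F" "F \<subseteq> A" "\<And>v. \<mu> v > 0"
  shows "ennreal (sum \<mu> F) \<le> wmeasure \<mu> A"
proof -
  have "ennreal (sum \<mu> F) = (\<Sum>v\<in>F. ennreal (\<mu> v))"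
    using assms by (simp add: sum_ennreal less_imp_le)
  also have "\<dots> = infsum (\<lambda>v. ennreal (\<mu> v)) F" using assms by simp
  also have "\<dots> \<le> infsum (\<lambda>v. ennreal (\<mu> v)) A"
    by (rule infsum_mono_neutral) (use assms in \<open>auto simp: nonneg_summable_on_complete\<close>)
  finally show ?thesis by (simp add: wmeasure_def)
qed

lemma ratio_le:
  "wmeasure \<mu> (gball E x (2*k+1)) / wmeasure \<mu> (gball E x k) \<le> doubling_const E \<mu>"
  unfolding doubling_const_def by (rule SUP_upper2[where i="(x,k)"]) simp_all

lemma doubling_real:
  assumes "doubling_measure E \<mu>"
  shows "doubling_const E \<mu> = ennreal (enn2real (doubling_const E \<mu>))"
  using assms by (simp add: doubling_measure_def)

lemma locfin:
  assumes sg: "simple_graph E" and c: "connected_graph E" and d: "doubling_measure E \<mu>"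
  shows "finite {y. E z y}"
proof -
  have pos: "\<And>v. \<mu> v > 0" using d by (simp add: doubling_measure_def)
  define c0 where "c0 = enn2real (doubling_const E \<mu>)"
  have c0: "doubling_const E \<mu> = ennreal c0" using doubling_real[OF d] c0_def by simp
  have c0nn: "c0 \<ge> 0" by (simp add: c0_def)
  have key: "sum \<mu> F \<le> c0 * \<mu> x" if F: "finite F" "F \<subseteq> gball E x 1" for F x
  proof -
    have "ennreal (sum \<mu> F) / ennreal (\<mu> x) \<le> wmeasure \<mu> (gball E x 1) / wmeasure \<mu> (gball E x 0)"
      using wmeasure_ge[OF F pos] wmeasure_finite[of "{x}" \<mu>] pos
      by (simp add: gball0[OF c] divide_right_mono_ennreal)
    also have "\<dots> \<le> ennreal c0" using ratio_le[of \<mu> E x 0] c0 by simp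
    finally have "ennreal (sum \<mu> F / \<mu> x) \<le> ennreal c0"
      using divide_ennreal[of "sum \<mu> F" "\<mu> x"] pos sum_nonneg[of F \<mu>] less_imp_le by metis
    then have "sum \<mu> F / \<mu> x \<le> c0" using c0nn by simp
    then show ?thesis using pos[of x] by (simp add: divide_le_eq)
  qed
  have nb: "\<mu> z \<le> c0 * \<mu> y" if "E z y" for y
  proof -
    have "E y z" using sg that by (simp add: simple_graph_def)
    then have "{z} \<subseteq> gball E y 1" using gdist_edge by (simp add: gball_def)
    from key[OF _ this] show ?thesis by simp
  qed
  have c1: "c0 \<ge> 1" using key[of "{z}" z] in_gball_self[of z E 1] pos[of z] by simp
  have "finite {y. E z y} \<and> card {y. E z y} \<le> nat \<lceil>c0 * c0\<rceil>"
  proof (rule finite_if_finite_subsets_card_bdd)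
    fix G assume G: "G \<subseteq> {y. E z y}" "finite G"
    have "G \<subseteq> gball E z 1" using G gdist_edge[of E z] by (auto simp: gball_def)
    from key[OF G(2) this] have s: "sum \<mu> G \<le> c0 * \<mu> z" .
    have "real (card G) * (\<mu> z / c0) \<le> sum \<mu> G"
      by (rule sum_bounded_below) (use G nb c1 in \<open>auto simp: divide_le_eq mult.commute\<close>)
    with s have "real (card G) * (\<mu> z / c0) \<le> c0 * \<mu> z" by linarith
    then have "real (card G) * \<mu> z \<le> (c0 * c0) * \<mu> z" using c1
      by (simp add: field_simps)
    then have "real (card G) \<le> c0 * c0" using pos[of z] by simp
    then show "card G \<le> nat \<lceil>c0 * c0\<rceil>" by linarith
  qed
  then show ?thesis by blast
qed

lemma balls_finite:
  assumes sg: "simple_graph E" and c: "connected_graph E" and d: "doubling_measure E \<mu>"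
  shows "finite (gball E x r)"
  using gball_finite[OF c locfin[OF sg c d]] .

lemma dc_le_iff:
  assumes fin: "\<And>x r. finite (gball E x r)" and pos: "\<And>v. \<mu> v > 0" and r: "r \<ge> 0"
  shows "doubling_const E \<mu> \<le> ennreal r \<longleftrightarrow>
    (\<forall>x k. sum \<mu> (gball E x (2*k+1)) \<le> r * sum \<mu> (gball E x k))"
proof -
  have sp: "sum \<mu> (gball E x k) > 0" for x k
    by (rule sum_pos) (use fin in_gball_self[of x E k] pos in auto)
  have eq: "wmeasure \<mu> (gball E x (2*k+1)) / wmeasure \<mu> (gball E x k)
      = ennreal (sum \<mu> (gball E x (2*k+1)) / sum \<mu> (gball E x k))" for x k
  proof -
    have nn: "0 \<le> sum \<mu> (gball E x (2*k+1))" by (rule sum_nonneg) (simp add: less_imp_le pos)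
    show ?thesis using divide_ennreal[OF nn sp[of x k]] by (simp add: wmeasure_finite fin pos)
  qed
  have "doubling_const E \<mu> \<le> ennreal r \<longleftrightarrow>
      (\<forall>x k. ennreal (sum \<mu> (gball E x (2*k+1)) / sum \<mu> (gball E x k)) \<le> ennreal r)"
    unfolding doubling_const_def by (auto simp: SUP_le_iff eq[simplified])
  also have "\<dots> \<longleftrightarrow> (\<forall>x k. sum \<mu> (gball E x (2*k+1)) \<le> r * sum \<mu> (gball E x k))"
    using r sp by (simp add: pos_divide_le_eq)
  finally show ?thesis .
qed

lemma path_bounds:
  fixes f :: "'a \<Rightarrow> real"
  assumes sg: "simple_graph E" and c: "connected_graph E"
    and fin: "\<And>x r. finite (gball E x r)" and pos: "\<And>v. f v > 0" and D: "D \<ge> 1"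
    and cond: "\<And>x k. sum f (gball E x (2*k+1)) \<le> D * sum f (gball E x k)"
  shows "(E ^^ n) x0 x \<Longrightarrow> f x0 / D ^ n \<le> f x \<and> f x \<le> D ^ n * f x0"
proof (induction n arbitrary: x)
  case 0 thus ?case by simp
next
  case (Suc n)
  have adj: "f b \<le> D * f a" if "E a b" for a b
  proof -
    have "b \<in> gball E a 1" using gdist_edge[of E a b] that by (simp add: gball_def)
    then have "f b \<le> sum f (gball E a 1)"
      by (intro member_le_sum) (use fin pos in \<open>auto intro: less_imp_le\<close>)
    also have "\<dots> \<le> D * sum f (gball E a 0)" using cond[of a 0] by simp
    also have "\<dots> = D * f a" by (simp add: gball0[OF c])
    finally show ?thesis .
  qed
  from Suc.prems obtain y where y: "(E ^^ n) x0 y" "E y x" by (rule relpowp_Suc_E)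
  have e1: "f x \<le> D * f y" using adj[OF y(2)] .
  have e2: "f y \<le> D * f x" using adj y(2) sg by (simp add: simple_graph_def)
  from Suc.IH[OF y(1)] have ih: "f x0 / D ^ n \<le> f y" "f y \<le> D ^ n * f x0" by auto
  have Dp: "D > 0" using D by simp
  have "f x0 / D ^ Suc n = (f x0 / D ^ n) / D" by simp
  also have "\<dots> \<le> f y / D" by (rule divide_right_mono[OF ih(1)]) (use Dp in simp)
  also have "\<dots> \<le> f x" using e2 Dp by (simp add: divide_le_eq mult.commute)
  finally have l: "f x0 / D ^ Suc n \<le> f x" .
  have "f x \<le> D * (D ^ n * f x0)" using e1 ih(2) Dp by (meson mult_left_mono order_trans less_imp_le)
  then show ?case using l by simp
qed

lemma closed_sum_le:
  "closed {f::'a \<Rightarrow> real. sum f A \<le> t * sum f B}"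
  by (intro closed_Collect_le continuous_intros continuous_on_product_coordinates)

theorem proposition2p2:
  fixes E :: "'a \<Rightarrow> 'a \<Rightarrow> bool"
  assumes "simple_graph E" and "connected_graph E"
    and "graph_doubling_const E < \<infinity>"
  shows "DM E \<noteq> {} \<and> convex_cone_fun (DM E)"
proof -
  let ?Cg = "graph_doubling_const E"
  have ne: "{\<mu>. doubling_measure E \<mu>} \<noteq> {}"
  proof
    assume "{\<mu>. doubling_measure E \<mu>} = {}"
    then have "?Cg = top" by (simp add: graph_doubling_const_def)
    with assms(3) show False by simp
  qed
  then obtain \<mu>0 where \<mu>0: "doubling_measure E \<mu>0" by blast
  have fin: "\<And>x r. finite (gball E x r)" using balls_finite[OF assms(1,2) \<mu>0] .
  define c where "c = enn2real ?Cg"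
  have Cg: "?Cg = ennreal c" using assms(3) c_def by simp
  have cnn: "c \<ge> 0" by (simp add: c_def)
  have lower: "?Cg \<le> doubling_const E \<mu>" if "doubling_measure E \<mu>" for \<mu>
    unfolding graph_doubling_const_def by (rule INF_lower) (use that in simp)
  have DM_iff: "\<mu> \<in> DM E \<longleftrightarrow> (\<forall>v. \<mu> v > 0) \<and>
      (\<forall>x k. sum \<mu> (gball E x (2*k+1)) \<le> c * sum \<mu> (gball E x k))" for \<mu>
  proof
    assume "\<mu> \<in> DM E"
    then have d: "doubling_measure E \<mu>" "doubling_const E \<mu> = ennreal c" by (auto simp: DM_def Cg)
    then have p: "\<forall>v. \<mu> v > 0" by (simp add: doubling_measure_def)
    with d dc_le_iff[OF fin _ cnn, of \<mu>] show "(\<forall>v. \<mu> v > 0) \<and>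
      (\<forall>x k. sum \<mu> (gball E x (2*k+1)) \<le> c * sum \<mu> (gball E x k))" by auto
  next
    assume R: "(\<forall>v. \<mu> v > 0) \<and>
      (\<forall>x k. sum \<mu> (gball E x (2*k+1)) \<le> c * sum \<mu> (gball E x k))"
    then have le: "doubling_const E \<mu> \<le> ennreal c" using dc_le_iff[OF fin _ cnn, of \<mu>] by auto
    then have "doubling_const E \<mu> < \<infinity>" using le_less_trans[OF le] by simp
    then have d: "doubling_measure E \<mu>" using R by (auto simp: doubling_measure_def)
    with le lower[OF d] show "\<mu> \<in> DM E" by (auto simp: DM_def Cg intro: antisym)
  qed
  have cone: "convex_cone_fun (DM E)"
    unfolding convex_cone_fun_def
  proof (intro ballI allI impI)
    fix \<mu> \<nu> and a b :: real
    assume \<mu>: "\<mu> \<in> DM E" and \<nu>: "\<nu> \<in> DM E" and a: "a > 0" and b: "b > 0"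
    let ?w = "\<lambda>v. a * \<mu> v + b * \<nu> v"
    have "\<forall>v. ?w v > 0" using \<mu> \<nu> a b by (simp add: DM_iff add_pos_pos)
    moreover have "sum ?w (gball E x (2*k+1)) \<le> c * sum ?w (gball E x k)" for x k
    proof -
      have h1: "sum \<mu> (gball E x (2*k+1)) \<le> c * sum \<mu> (gball E x k)" using \<mu> DM_iff by blast
      have h2: "sum \<nu> (gball E x (2*k+1)) \<le> c * sum \<nu> (gball E x k)" using \<nu> DM_iff by blast
      have "sum ?w (gball E x (2*k+1)) = a * sum \<mu> (gball E x (2*k+1)) + b * sum \<nu> (gball E x (2*k+1))"
        by (simp add: sum.distrib sum_distrib_left)
      also have "\<dots> \<le> a * (c * sum \<mu> (gball E x k)) + b * (c * sum \<nu> (gball E x k))"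
        using h1 h2 a b by (intro add_mono mult_left_mono) auto
      also have "\<dots> = c * sum ?w (gball E x k)"
        by (simp add: sum.distrib sum_distrib_left algebra_simps)
      finally show ?thesis .
    qed
    ultimately show "?w \<in> DM E" by (simp add: DM_iff)
  qed
  have "\<exists>\<mu>. doubling_measure E \<mu> \<and> doubling_const E \<mu> < ennreal (c + 1 / Suc n)" for n
  proof -
    have "?Cg < ennreal (c + 1 / Suc n)" using Cg cnn by (simp add: ennreal_less_iff)
    then show ?thesis unfolding graph_doubling_const_def INF_less_iff by blast
  qed
  then obtain M where M: "\<And>n. doubling_measure E (M n)"
    "\<And>n. doubling_const E (M n) < ennreal (c + 1 / Suc n)" by metis
  define x0 :: 'a where "x0 = undefined"
  define N where "N n v = M n v / M n x0" for n v
  define r where "r n = c + 1 / Suc n" for n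
  have rnn: "r n \<ge> 0" for n using cnn by (simp add: r_def)
  have rD: "r n \<le> c + 1" for n by (simp add: r_def)
  have rmono: "r m \<le> r n" if "n \<le> m" for n m
    using that by (simp add: r_def frac_le)
  have Mpos: "M n v > 0" for n v using M(1) by (simp add: doubling_measure_def)
  have Npos: "N n v > 0" for n v using Mpos by (simp add: N_def)
  have N0: "N n x0 = 1" for n using Mpos[of n x0] by (simp add: N_def)
  have Ncond: "sum (N n) (gball E x (2*k+1)) \<le> r n * sum (N n) (gball E x k)" for n x k
  proof -
    have "sum (M n) (gball E x (2*k+1)) \<le> r n * sum (M n) (gball E x k)"
      using dc_le_iff[where \<mu>="M n" and r="r n", OF fin Mpos[of n] rnn[of n]] M(2)[of n] by (simp add: r_def less_imp_le)
    then have "sum (M n) (gball E x (2*k+1)) / M n x0 \<le> r n * sum (M n) (gball E x k) / M n x0"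
      by (rule divide_right_mono) (use Mpos[of n x0] in simp)
    then show ?thesis by (simp add: N_def sum_divide_distrib[symmetric])
  qed
  have Cmono: "sum f (gball E x (2*k+1)) \<le> r n * sum f (gball E x k)"
    if "sum f (gball E x (2*k+1)) \<le> r m * sum f (gball E x k)" "n \<le> m" "\<And>v. f v > 0"
    for f :: "'a \<Rightarrow> real" and n m x k
  proof -
    have "0 \<le> sum f (gball E x k)" by (rule sum_nonneg) (use that(3) less_imp_le in blast)
    then have "r m * sum f (gball E x k) \<le> r n * sum f (gball E x k)"
      using rmono[OF that(2)] by (rule mult_right_mono[rotated])
    with that(1) show ?thesis by linarith
  qed
  define D where "D = c + 1"
  have D1: "D \<ge> 1" using cnn by (simp add: D_def)
  define K where "K = PiE UNIV (\<lambda>x. {1 / D ^ gdist E x0 x .. D ^ gdist E x0 x})"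
  have cK: "compact K"
    using compactin_PiE[of "\<lambda>_. euclidean" UNIV "\<lambda>x. {1 / D ^ gdist E x0 x .. D ^ gdist E x0 x}"]
    unfolding euclidean_product_topology K_def by simp
  define C where "C n = {f. \<forall>x k. sum f (gball E x (2*k+1)) \<le> r n * sum f (gball E x k)}" for n
  have cC: "closed (C n)" for n
    unfolding C_def by (intro closed_Collect_all closed_sum_le)
  have NK: "N n \<in> K" for n
  proof -
    have cD: "sum (N n) (gball E x (2*k+1)) \<le> D * sum (N n) (gball E x k)" for x k
    proof -
      have "0 \<le> sum (N n) (gball E x k)" by (rule sum_nonneg) (use Npos less_imp_le in blast)
      then have "r n * sum (N n) (gball E x k) \<le> D * sum (N n) (gball E x k)"
        using rD[of n] by (intro mult_right_mono) (auto simp: D_def)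
      with Ncond[of n x k] show ?thesis by linarith
    qed
    have "1 / D ^ gdist E x0 x \<le> N n x \<and> N n x \<le> D ^ gdist E x0 x" for x
      using path_bounds[OF assms(1,2) fin Npos D1 cD gdist_path[OF assms(2), of x0 x]] N0[of n]
      by simp
    then show ?thesis by (simp add: K_def PiE_iff)
  qed
  have NC: "N m \<in> C n" if "n \<le> m" for n m
    unfolding C_def using Cmono[OF Ncond that Npos] by blast
  have "K \<inter> (\<Inter>n\<in>UNIV. C n) \<noteq> {}"
  proof (rule compact_imp_fip_image[OF cK])
    fix I' :: "nat set" assume I': "finite I'" "I' \<subseteq> UNIV"
    define m where "m = (if I' = {} then 0 else Max I')"
    have "N m \<in> C i" if "i \<in> I'" for i
      using that I' NC Max_ge by (auto simp: m_def)
    with NK[of m] show "K \<inter> (\<Inter>i\<in>I'. C i) \<noteq> {}" by blast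
  qed (rule cC)
  then obtain f where fK: "f \<in> K" and fC: "\<And>n. f \<in> C n" by blast
  have fpos: "f v > 0" for v
  proof -
    have "1 / D ^ gdist E x0 v \<le> f v" using fK by (simp add: K_def PiE_iff)
    moreover have "1 / D ^ gdist E x0 v > 0" using D1 by simp
    ultimately show ?thesis by linarith
  qed
  have fc: "sum f (gball E x (2*k+1)) \<le> c * sum f (gball E x k)" for x k
  proof (rule ccontr)
    let ?A = "sum f (gball E x (2*k+1))" and ?B = "sum f (gball E x k)"
    assume "\<not> ?thesis"
    then have gt: "?A > c * ?B" by simp
    have Bp: "?B > 0" by (rule sum_pos) (use fin in_gball_self[of x E k] fpos in auto)
    have "(?A - c * ?B) / ?B > 0" using gt Bp by simp
    then obtain n :: nat where n: "n > 0" "inverse (real n) < (?A - c * ?B) / ?B"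
      using ex_inverse_of_nat_less by blast
    have "f \<in> C (n - 1)" by (rule fC)
    then have "?A \<le> r (n - 1) * ?B" by (simp add: C_def)
    also have "r (n - 1) = c + inverse (real n)" using n(1) by (simp add: r_def divide_inverse)
    finally have "?A \<le> c * ?B + inverse (real n) * ?B" by (simp add: algebra_simps)
    moreover have "inverse (real n) * ?B < ?A - c * ?B" using n(2) Bp by (simp add: less_divide_eq)
    ultimately show False by linarith
  qed
  have "f \<in> DM E" using fpos fc by (simp add: DM_iff)
  with cone show ?thesis by blast
qed

end
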